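(* For $\mathbf k\in\mathbb Z^r_{++}$ let $\tilde C^d(\lambda,\mu,\mathbf k)=\frac{\prod_{1\le i\le j\le r}(\lambda+\mu-1-\frac d2(i+j-2))_{k_i+k_j}}{\prod_{1\le i<j\le r+1}(\lambda+\mu-1-\frac d2(i+j-3))_{k_i+k_j}}$ with $k_{r+1}=0$. If $1\le m_1\le m_2\le r$, $k_1=\dots=k_{m_1}$ and $k_{m_2+1}=0$, then $$\{(\lambda,\mu)\in\mathbb C^2:\tilde C^d(\lambda,\mu,\mathbf k)=0\}\subset\Bigl\{(\lambda,\mu):\ \tfrac d2(m_1-1)-2k_1+2\le\lambda+\mu\le d(m_2-1)-k_{m_2}+1\Bigr\}$$ if $k_1\ge1$, and the set is empty if $k_1=0$. In particular, for $m=0,1,\dots,r-1$, if $k_{m+1}=0$ then $\tilde C^d(\lambda,\mu,\mathbf k)\ne0$ for all real $\lambda,\mu\ge\frac d2m$.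
   Context: $r\ge1$ integer, $d>0$ real, $\mathbb Z^r_{++}=\{\mathbf k\in\mathbb Z^r:k_1\ge\dots\ge k_r\ge0\}$, $(a)_m=a(a+1)\cdots(a+m-1)$. $\tilde C^d$ is a rational function of $\lambda+\mu$; its zero set means the points where the reduced rational function vanishes (the inequalities in particular force $\lambda+\mu$ real). *)

theory Defs
  imports "HOL-Computational_Algebra.Polynomial"
begin

definition poch_poly :: "complex \<Rightarrow> nat \<Rightarrow> complex poly" where
  "poch_poly a n = (\<Prod>l<n. [: a + of_nat l, 1 :])"

definition kext :: "nat \<Rightarrow> (nat \<Rightarrow> nat) \<Rightarrow> nat \<Rightarrow> nat" where
  "kext r k i = (if i \<le> r then k i else 0)"

text \<open>Numerator of tilde C^d as a polynomial in x = lambda + mu.\<close>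
definition Ct_num :: "real \<Rightarrow> nat \<Rightarrow> (nat \<Rightarrow> nat) \<Rightarrow> complex poly" where
  "Ct_num d r k = (\<Prod>(i,j)\<in>{(i,j). 1 \<le> i \<and> i \<le> j \<and> j \<le> r}.
      poch_poly (- 1 - complex_of_real (d/2) * (of_nat i + of_nat j - 2)) (kext r k i + kext r k j))"

definition Ct_den :: "real \<Rightarrow> nat \<Rightarrow> (nat \<Rightarrow> nat) \<Rightarrow> complex poly" where
  "Ct_den d r k = (\<Prod>(i,j)\<in>{(i,j). 1 \<le> i \<and> i < j \<and> j \<le> r + 1}.
      poch_poly (- 1 - complex_of_real (d/2) * (of_nat i + of_nat j - 3)) (kext r k i + kext r k j))"

text \<open>The reduced rational function Ct_num/Ct_den vanishes at x.\<close>
definition Ct_zero :: "real \<Rightarrow> nat \<Rightarrow> (nat \<Rightarrow> nat) \<Rightarrow> complex \<Rightarrow> bool" where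
  "Ct_zero d r k x \<longleftrightarrow> order x (Ct_den d r k) < order x (Ct_num d r k)"

end

theory Submission imports Defs begin

lemma poch_add: "poch_poly a (n + m) = poch_poly a n * poch_poly (a + of_nat n) m"
  by (induction m) (simp_all add: poch_poly_def algebra_simps)

lemma poch_nz: "poch_poly a n \<noteq> 0"
  by (simp add: poch_poly_def)

lemma poch_root: "poly (poch_poly a n) x = 0 \<longleftrightarrow> (\<exists>l<n. x = - a - of_nat l)"
  by (auto simp add: poch_poly_def poly_prod algebra_simps eq_neg_iff_add_eq_0)

definition Sset :: "nat \<Rightarrow> (nat \<times> nat) set" where
  "Sset r = {(i,j). 1 \<le> i \<and> i \<le> j \<and> j \<le> r}"

lemma Sset_fin: "finite (Sset r)"
  by (rule finite_subset[of _ "{1..r} \<times> {1..r}"]) (auto simp: Sset_def)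

lemma den_reindex:
  "Ct_den d r k = (\<Prod>(i,j)\<in>Sset r.
      poch_poly (- 1 - complex_of_real (d/2) * (of_nat i + of_nat j - 2)) (kext r k i + kext r k (j+1)))"
  unfolding Ct_den_def Sset_def
  apply (rule prod.reindex_bij_witness[of _ "\<lambda>(i,j). (i,j+1)" "\<lambda>(i,j). (i,j-1)"])
  apply auto
  done

definition aa :: "real \<Rightarrow> nat \<Rightarrow> nat \<Rightarrow> complex" where
  "aa d i j = - 1 - complex_of_real (d/2) * (of_nat i + of_nat j - 2)"

definition Pp :: "real \<Rightarrow> nat \<Rightarrow> (nat \<Rightarrow> nat) \<Rightarrow> complex poly" where
  "Pp d r k = (\<Prod>(i,j)\<in>Sset r. poch_poly (aa d i j + of_nat (kext r k i + kext r k (j+1)))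
        (kext r k j - kext r k (j+1)))"

lemma kext_mono:
  assumes mono: "\<forall>i j. 1 \<le> i \<and> i \<le> j \<and> j \<le> r \<longrightarrow> k j \<le> k i" and "1 \<le> j" "j \<le> r"
  shows "kext r k (j+1) \<le> kext r k j"
  using assms by (auto simp: kext_def)

lemma num_eq:
  assumes mono: "\<forall>i j. 1 \<le> i \<and> i \<le> j \<and> j \<le> r \<longrightarrow> k j \<le> k i"
  shows "Ct_num d r k = Ct_den d r k * Pp d r k"
proof -
  have "Ct_num d r k = (\<Prod>(i,j)\<in>Sset r. poch_poly (aa d i j) (kext r k i + kext r k j))"
    unfolding Ct_num_def Sset_def aa_def by simp
  also have "\<dots> = (\<Prod>(i,j)\<in>Sset r. poch_poly (aa d i j) (kext r k i + kext r k (j+1)) *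
      poch_poly (aa d i j + of_nat (kext r k i + kext r k (j+1))) (kext r k j - kext r k (j+1)))"
  proof (rule prod.cong[OF refl])
    fix p assume "p \<in> Sset r"
    then obtain i j where p: "p = (i,j)" "1 \<le> i" "i \<le> j" "j \<le> r" by (auto simp: Sset_def)
    have "kext r k (j+1) \<le> kext r k j" using kext_mono[OF mono] p by auto
    then have "kext r k i + kext r k j = (kext r k i + kext r k (j+1)) + (kext r k j - kext r k (j+1))"
      by simp
    then show "(case p of (i,j) \<Rightarrow> poch_poly (aa d i j) (kext r k i + kext r k j)) =
      (case p of (i,j) \<Rightarrow> poch_poly (aa d i j) (kext r k i + kext r k (j+1)) *
      poch_poly (aa d i j + of_nat (kext r k i + kext r k (j+1))) (kext r k j - kext r k (j+1)))"
      using p by (metis (no_types, lifting) case_prod_conv poch_add)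
  qed
  also have "\<dots> = Ct_den d r k * Pp d r k"
    unfolding den_reindex Pp_def aa_def prod.distrib[symmetric] by (simp add: case_prod_beta)
  finally show ?thesis .
qed

lemma den_nz: "Ct_den d r k \<noteq> 0"
  unfolding den_reindex using Sset_fin by (simp add: prod_zero_iff poch_nz case_prod_beta)

lemma Pp_nz: "Pp d r k \<noteq> 0"
  unfolding Pp_def using Sset_fin by (simp add: prod_zero_iff poch_nz case_prod_beta)

lemma char:
  assumes mono: "\<forall>i j. 1 \<le> i \<and> i \<le> j \<and> j \<le> r \<longrightarrow> k j \<le> k i"
  shows "Ct_zero d r k x \<longleftrightarrow> (\<exists>i j l. 1\<le>i \<and> i\<le>j \<and> j\<le>r \<and> kext r k (j+1) + l < k j \<and>
     x = complex_of_real (1 + d/2*(real i + real j - 2) - real (k i + kext r k (j+1) + l)))" (is "_ \<longleftrightarrow> ?R")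
proof -
  have "Ct_zero d r k x \<longleftrightarrow> order x (Pp d r k) \<noteq> 0"
    unfolding Ct_zero_def num_eq[OF mono] using order_mult[of "Ct_den d r k" "Pp d r k" x] den_nz Pp_nz
    by simp
  also have "\<dots> \<longleftrightarrow> poly (Pp d r k) x = 0" using order_root Pp_nz by blast
  also have "\<dots> \<longleftrightarrow> (\<exists>(i,j)\<in>Sset r. \<exists>l < kext r k j - kext r k (j+1).
        x = - (aa d i j + of_nat (kext r k i + kext r k (j+1))) - of_nat l)"
    unfolding Pp_def poly_prod using Sset_fin by (simp add: prod_zero_iff case_prod_beta poch_root)
  also have "\<dots> \<longleftrightarrow> ?R"
  proof
    assume "\<exists>(i,j)\<in>Sset r. \<exists>l < kext r k j - kext r k (j+1).
        x = - (aa d i j + of_nat (kext r k i + kext r k (j+1))) - of_nat l"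
    then obtain i j l where h: "1\<le>i" "i\<le>j" "j\<le>r" "l < kext r k j - kext r k (j+1)"
      "x = - (aa d i j + of_nat (kext r k i + kext r k (j+1))) - of_nat l" by (auto simp: Sset_def)
    show ?R
      apply (rule exI[of _ i], rule exI[of _ j], rule exI[of _ l])
      using h by (auto simp: kext_def aa_def)
  next
    assume ?R
    then obtain i j l where h: "1\<le>i" "i\<le>j" "j\<le>r" "kext r k (j+1) + l < k j"
     "x = complex_of_real (1 + d/2*(real i + real j - 2) - real (k i + kext r k (j+1) + l))" by blast
    show "\<exists>(i,j)\<in>Sset r. \<exists>l < kext r k j - kext r k (j+1).
        x = - (aa d i j + of_nat (kext r k i + kext r k (j+1))) - of_nat l"
      apply (rule bexI[of _ "(i,j)"])
      using h by (auto simp: kext_def aa_def Sset_def intro!: exI[of _ l])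
  qed
  finally show ?thesis .
qed

lemma P1:
  assumes d: "d > 0" and mono: "\<forall>i j. 1 \<le> i \<and> i \<le> j \<and> j \<le> r \<longrightarrow> k j \<le> k i"
    and H1: "1 \<le> m1" "m1 \<le> m2" "m2 \<le> r" and H2: "\<forall>i\<in>{1..m1}. k i = k 1"
    and H3: "kext r k (m2 + 1) = 0" and z: "Ct_zero d r k x"
  shows "\<exists>t. x = complex_of_real t \<and> d/2 * (real m1 - 1) - 2 * real (k 1) + 2 \<le> t \<and>
       t \<le> d * (real m2 - 1) - real (k m2) + 1"
proof -
  obtain i j l where h: "1\<le>i" "i\<le>j" "j\<le>r" "kext r k (j+1) + l < k j"
     "x = complex_of_real (1 + d/2*(real i + real j - 2) - real (k i + kext r k (j+1) + l))"
    using z unfolding char[OF mono] by blast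
  have jm1: "m1 \<le> j"
  proof (rule ccontr)
    assume "\<not> m1 \<le> j"
    then have a: "j+1 \<in> {1..m1}" "j \<in> {1..m1}" "j+1 \<le> r" using H1 h(1-4) by simp_all
    have "k (j+1) = k 1" "k j = k 1" using H2 a(1,2) by blast+
    moreover have "kext r k (j+1) = k (j+1)" using a(3) by (simp add: kext_def)
    ultimately show False using h(1-4) by simp
  qed
  have jm2: "j \<le> m2"
  proof (rule ccontr)
    assume c: "\<not> j \<le> m2"
    then have r: "m2+1 \<le> r" using h(1-4) by simp
    then have "k (m2+1) = 0" using H3 by (simp add: kext_def)
    moreover have "k j \<le> k (m2+1)" using mono r c h(1-4) by simp
    ultimately show False using h(1-4) by simp
  qed
  have ki1: "k i \<le> k 1" "k j \<le> k 1" using mono h(1-4) by simp_all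
  have kim2: "k m2 \<le> k i" using mono h(1-4) jm2 H1 by simp
  define t where "t = 1 + d*real i/2 + d*real j/2 - d - (real (k i) + real (kext r k (j+1)) + real l)"
  have "t = 1 + d/2*(real i + real j - 2) - real (k i + kext r k (j+1) + l)"
    unfolding t_def by (simp add: algebra_simps)
  then have x: "x = complex_of_real t" using h(5) by simp
  have up: "d*real i \<le> d*real m2" "d*real j \<le> d*real m2"
    using h(1-4) jm2 d by (intro mult_left_mono; simp)+
  have lo: "d*real m1 \<le> d*real j" "d*1 \<le> d*real i"
    using h(1-4) jm1 d by (intro mult_left_mono; simp)+
  have e1: "d*(real m2 - 1) = d*real m2 - d" "d/2*(real m1 - 1) = d*real m1/2 - d/2"
    by (simp add: algebra_simps, simp add: field_simps)
  have "real (kext r k (j+1)) + real l + 1 \<le> real (k j)" using h(4) by linarith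
  moreover have "real (k i) \<le> real (k 1)" "real (k j) \<le> real (k 1)" "real (k m2) \<le> real (k i)"
    using ki1 kim2 by simp_all
  moreover have "0 \<le> real l" "0 \<le> real (kext r k (j+1))" by simp_all
  ultimately have "d/2 * (real m1 - 1) - 2 * real (k 1) + 2 \<le> t"
     "t \<le> d * (real m2 - 1) - real (k m2) + 1"
    using up lo e1 unfolding t_def by linarith+
  with x show ?thesis by blast
qed

lemma P1b:
  assumes mono: "\<forall>i j. 1 \<le> i \<and> i \<le> j \<and> j \<le> r \<longrightarrow> k j \<le> k i"
    and k0: "k 1 = 0"
  shows "\<not> Ct_zero d r k x"
proof
  assume "Ct_zero d r k x"
  then obtain i j l where h: "1\<le>i" "i\<le>j" "j\<le>r" "kext r k (j+1) + l < k j"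
    using char[OF mono] by blast
  have "k j \<le> k 1" using mono h by simp
  then show False using h k0 by simp
qed

lemma P2:
  assumes d: "d > 0" and mono: "\<forall>i j. 1 \<le> i \<and> i \<le> j \<and> j \<le> r \<longrightarrow> k j \<le> k i"
   and m: "m < r" "k (m+1) = 0" and lm: "lam \<ge> d/2 * real m" "mu \<ge> d/2 * real m"
  shows "\<not> Ct_zero d r k (complex_of_real (lam + mu))"
proof
  assume "Ct_zero d r k (complex_of_real (lam + mu))"
  then obtain i j l where h: "1\<le>i" "i\<le>j" "j\<le>r" "kext r k (j+1) + l < k j"
   "complex_of_real (lam+mu) = complex_of_real (1 + d/2*(real i + real j - 2) - real (k i + kext r k (j+1) + l))"
    using char[OF mono] by blast
  have e: "lam + mu = 1 + d/2*(real i + real j - 2) - real (k i + kext r k (j+1) + l)"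
    using h(5) of_real_eq_iff by blast
  have jm: "j \<le> m"
  proof (rule ccontr)
    assume "\<not> j \<le> m"
    then have "k j \<le> k (m+1)" using mono[rule_format, of "m+1" j] h m by simp
    then show False using h m by simp
  qed
  have "k j \<le> k i" using mono h by simp
  then have ki: "1 \<le> real (k i)" using h by linarith
  have a1: "d*real i \<le> d*real m" "d*real j \<le> d*real m"
    using h jm d by (intro mult_left_mono; simp)+
  have nn: "0 \<le> real l" "0 \<le> real (kext r k (j+1))" by simp_all
  have e': "lam+mu = 1 + d*real i/2 + d*real j/2 - d - (real(k i)+real(kext r k (j+1))+real l)"
    using e by (simp add: algebra_simps)
  have "d * real m \<le> lam + mu" using lm by (simp add: algebra_simps)
  then show False using d a1 e' ki nn by linarith
qed

theorem proposition8p6: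
  fixes d :: real and r :: nat and k :: "nat \<Rightarrow> nat"
  assumes "r \<ge> 1" and "d > 0"
    and mono: "\<forall>i j. 1 \<le> i \<and> i \<le> j \<and> j \<le> r \<longrightarrow> k j \<le> k i"
  shows "(\<forall>m1 m2. 1 \<le> m1 \<and> m1 \<le> m2 \<and> m2 \<le> r \<and> (\<forall>i\<in>{1..m1}. k i = k 1) \<and> kext r k (m2 + 1) = 0 \<longrightarrow>
            (k 1 \<ge> 1 \<longrightarrow>
               {(lam :: complex, mu :: complex). Ct_zero d r k (lam + mu)}
               \<subseteq> {(lam, mu). \<exists>t::real. lam + mu = complex_of_real t \<and>
                     d/2 * (real m1 - 1) - 2 * real (k 1) + 2 \<le> t \<and>
                     t \<le> d * (real m2 - 1) - real (k m2) + 1}) \<and>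
            (k 1 = 0 \<longrightarrow> {(lam :: complex, mu :: complex). Ct_zero d r k (lam + mu)} = {}))
       \<and> (\<forall>m < r. k (m + 1) = 0 \<longrightarrow>
            (\<forall>lam mu :: real. lam \<ge> d/2 * real m \<and> mu \<ge> d/2 * real m \<longrightarrow>
               \<not> Ct_zero d r k (complex_of_real (lam + mu))))"
proof -
  have A: "{(lam :: complex, mu :: complex). Ct_zero d r k (lam + mu)}
               \<subseteq> {(lam, mu). \<exists>t::real. lam + mu = complex_of_real t \<and>
                     d/2 * (real m1 - 1) - 2 * real (k 1) + 2 \<le> t \<and>
                     t \<le> d * (real m2 - 1) - real (k m2) + 1}"
    if H: "1 \<le> m1 \<and> m1 \<le> m2 \<and> m2 \<le> r \<and> (\<forall>i\<in>{1..m1}. k i = k 1) \<and> kext r k (m2 + 1) = 0"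
    for m1 m2
  proof (rule subsetI)
    fix p assume "p \<in> {(lam :: complex, mu :: complex). Ct_zero d r k (lam + mu)}"
    then obtain lam mu where p: "p = (lam, mu)" "Ct_zero d r k (lam + mu)" by blast
    have "\<exists>t. lam + mu = complex_of_real t \<and> d/2 * (real m1 - 1) - 2 * real (k 1) + 2 \<le> t \<and>
       t \<le> d * (real m2 - 1) - real (k m2) + 1"
      using P1[OF assms(2) mono, of m1 m2] H p(2) by blast
    then show "p \<in> {(lam, mu). \<exists>t::real. lam + mu = complex_of_real t \<and>
                     d/2 * (real m1 - 1) - 2 * real (k 1) + 2 \<le> t \<and>
                     t \<le> d * (real m2 - 1) - real (k m2) + 1}" using p(1) by simp
  qed
  have B: "{(lam :: complex, mu :: complex). Ct_zero d r k (lam + mu)} = {}" if "k 1 = 0"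
    using P1b[OF mono that] by blast
  have C: "\<not> Ct_zero d r k (complex_of_real (lam + mu))"
    if "m < r" "k (m + 1) = 0" "lam \<ge> d/2 * real m \<and> mu \<ge> d/2 * real m" for m lam mu
    using P2[OF assms(2) mono, of m lam mu] that by blast
  show ?thesis using A B C by blast
qed

end
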